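(* Let $V$ be a $W\times W$ GOE random matrix, let $\sigma$ be a fixed (deterministic) complex $W\times W$ matrix, and let $s\in(0,1)$. Then for all vectors $\phi,\psi\in\mathbb C^W$, $$\mathbb E\big|\langle (V-\sigma)^{-1}\phi,\psi\rangle\big|^s\ \ge\ C_{\|\sigma\|,s}\,\|\phi\|^s\|\psi\|^s,$$ where $C_{\|\sigma\|,s}>0$ depends only on $\|\sigma\|$, $s$ and $W$.
   Context: GOE means that $V$ is real symmetric, with $V_{jj}\sim N(0,2)$ and $V_{jk}=V_{kj}\sim N(0,1)$ for $j<k$, all these entries independent. *)

theory Defs
  imports "HOL-Analysis.Analysis" "HOL-Probability.Probability"
begin

definition gauss_var :: "real \<Rightarrow> real measure" where
  "gauss_var v = density lborel (normal_density 0 (sqrt v))"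

definition GOE_entries :: "(('n::{finite,linorder} \<times> 'n) \<Rightarrow> real) measure" where
  "GOE_entries = PiM {(j,k). j \<le> k} (\<lambda>(j,k). if j = k then gauss_var 2 else gauss_var 1)"

definition GOE :: "(real^('n::{finite,linorder})^('n::{finite,linorder})) measure" where
  "GOE = distr GOE_entries borel
     (\<lambda>X. \<chi> j k. if j \<le> k then X (j,k) else X (k,j))"

definition cmat_of_real :: "real^'n^'m \<Rightarrow> complex^'n^'m" where
  "cmat_of_real V = (\<chi> i j. complex_of_real (V $ i $ j))"

definition cinner :: "complex^'n \<Rightarrow> complex^'n \<Rightarrow> complex" where
  "cinner x y = (\<Sum>i\<in>UNIV. x $ i * cnj (y $ i))"

definition opnorm :: "complex^'n^'m \<Rightarrow> real" where
  "opnorm A = onorm (\<lambda>x. A *v x)"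

end

theory Submission
  imports Defs
begin

lemma mv_bound:
  fixes A :: "complex^'n^'n"
  assumes "\<And>i j. cmod (A$i$j) \<le> 1"
  shows "norm (A *v x) \<le> real CARD('n)^2 * norm x"
proof -
  have c: "cmod ((A *v x)$i) \<le> real CARD('n) * norm x" for i
  proof -
    have "cmod ((A *v x)$i) = cmod (\<Sum>j\<in>UNIV. A$i$j * x$j)"
      by (simp add: matrix_vector_mult_def)
    also have "\<dots> \<le> (\<Sum>j\<in>UNIV. cmod (A$i$j * x$j))" by (rule norm_sum)
    also have "\<dots> \<le> (\<Sum>j\<in>(UNIV::'n set). norm x)"
    proof (rule sum_mono)
      fix j
      have "cmod (A$i$j * x$j) = cmod (A$i$j) * cmod (x$j)" by (simp add: norm_mult)
      also have "\<dots> \<le> 1 * norm x"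
        by (rule mult_mono) (use assms Finite_Cartesian_Product.norm_nth_le[of x j] in auto)
      finally show "cmod (A$i$j * x$j) \<le> norm x" by simp
    qed
    finally show ?thesis by simp
  qed
  have "norm (A *v x) \<le> (\<Sum>i\<in>UNIV. cmod ((A *v x)$i))"
    unfolding norm_vec_def by (rule L2_set_le_sum) auto
  also have "\<dots> \<le> (\<Sum>i\<in>(UNIV::'n set). real CARD('n) * norm x)"
    by (rule sum_mono) (rule c)
  finally show ?thesis by (simp add: power2_eq_square)
qed

lemma cinner_CS: "cmod (cinner x y) \<le> norm x * norm y"
proof -
  have "cmod (cinner x y) \<le> (\<Sum>i\<in>UNIV. cmod (x$i) * cmod (y$i))"
    unfolding cinner_def by (rule order_trans[OF norm_sum]) (simp add: norm_mult)
  also have "\<dots> \<le> L2_set (\<lambda>i. cmod (x$i)) UNIV * L2_set (\<lambda>i. cmod (y$i)) UNIV"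
    using L2_set_mult_ineq[of "\<lambda>i. cmod (x$i)" "\<lambda>i. cmod (y$i)" UNIV] by simp
  finally show ?thesis by (simp add: norm_vec_def)
qed

lemma cinner_diff: "cinner (x - y) z = cinner x z - cinner y z"
  by (simp add: cinner_def sum_subtractf algebra_simps)
lemma cinner_add: "cinner (x + y) z = cinner x z + cinner y z"
  by (simp add: cinner_def sum.distrib algebra_simps)
lemma cinner_scaleR: "cinner (t *\<^sub>R x) z = of_real t * cinner x z"
  by (simp add: cinner_def sum_distrib_left algebra_simps) (simp add: scaleR_conv_of_real)

lemma mv_scaleR: "(A::complex^'n^'m) *v (t *\<^sub>R x) = t *\<^sub>R (A *v x)"
  by (simp add: vec_eq_iff matrix_vector_mult_def sum_distrib_left algebra_simps) (simp add: scaleR_conv_of_real sum_distrib_left algebra_simps)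

lemma inv_from_inj:
  fixes M :: "complex^'n^'n"
  assumes "inj ((*v) M)"
  shows "invertible M"
proof -
  have "det M \<noteq> 0" using det_nz_iff_inj_gen[of "(*v) M"] assms by simp
  then show ?thesis by (simp add: invertible_det_nz)
qed

lemma matrix_inv_mv:
  fixes M :: "complex^'n^'n"
  assumes "invertible M"
  shows "M *v (matrix_inv M *v y) = y"
proof -
  have "M ** matrix_inv M = mat 1"
    using assms unfolding invertible_def matrix_inv_def by (rule someI_ex[THEN conjunct1])
  then show ?thesis by (simp add: matrix_vector_mul_assoc)
qed

lemma key:
  fixes Rc Ec \<sigma> M :: "complex^'n^'n" and \<phi> \<psi> :: "complex^'n"
  assumes RR: "Rc ** Rc = mat 1" and Rb: "\<And>i j. cmod (Rc$i$j) \<le> 1"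
    and Eb: "\<And>i j. cmod (Ec$i$j) \<le> 1"
    and sb: "\<And>x. norm (\<sigma> *v x) \<le> r * norm x" and r0: "0 \<le> r" and c0: "0 < c"
    and a: "c * norm \<phi> * norm \<psi> \<le> cmod (cinner (Rc *v \<phi>) \<psi>)"
    and tb: "2*(real CARD('n)^2)*(real CARD('n)^2+r) + 4*(real CARD('n)^2)^2*(real CARD('n)^2+r)/c \<le> t"
    and Mx: "\<And>x. M *v x = t *\<^sub>R (Rc *v x) + (Ec *v x - \<sigma> *v x)"
  shows "invertible M \<and> (c/2)/t * norm \<phi> * norm \<psi> \<le> cmod (cinner (matrix_inv M *v \<phi>) \<psi>)"
proof -
  define \<beta> where "\<beta> = real CARD('n)^2"
  define K where "K = \<beta> + r"
  have b1: "1 \<le> \<beta>" unfolding \<beta>_def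
  proof -
    have "1 \<le> real CARD('n)" using finite_UNIV_card_ge_0[where 'a='n] by simp
    then show "1 \<le> real CARD('n)^2" by (rule one_le_power)
  qed
  have K0: "0 < K" using b1 r0 K_def by simp
  have t1: "2*\<beta>*K \<le> t" and t2: "4*\<beta>^2*K/c \<le> t"
    using tb c0 K0 b1 unfolding \<beta>_def[symmetric] K_def[symmetric]
    by (smt (verit) divide_nonneg_pos mult_nonneg_nonneg zero_le_power)+
  have t0: "0 < t" using t1 b1 K0
    by (smt (verit) mult_pos_pos)
  have Rcb: "norm (Rc *v x) \<le> \<beta> * norm x" for x
    unfolding \<beta>_def by (rule mv_bound) (rule Rb)
  have lowR: "norm x \<le> \<beta> * norm (Rc *v x)" for x
  proof -
    have "x = Rc *v (Rc *v x)" by (simp add: matrix_vector_mul_assoc RR)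
    then have "norm x = norm (Rc *v (Rc *v x))" by simp
    also have "\<dots> \<le> \<beta> * norm (Rc *v x)" by (rule Rcb)
    finally show ?thesis .
  qed
  have errb: "norm (Ec *v x - \<sigma> *v x) \<le> K * norm x" for x
  proof -
    have "norm (Ec *v x - \<sigma> *v x) \<le> norm (Ec *v x) + norm (\<sigma> *v x)" by (rule norm_triangle_ineq4)
    also have "\<dots> \<le> \<beta> * norm x + r * norm x"
      using mv_bound[of Ec x, OF Eb] sb[of x] unfolding \<beta>_def by linarith
    finally show ?thesis by (simp add: K_def algebra_simps)
  qed
  have lowM: "t/(2*\<beta>) * norm x \<le> norm (M *v x)" for x
  proof -
    have "norm (t *\<^sub>R (Rc *v x)) - norm (Ec *v x - \<sigma> *v x) \<le> norm (M *v x)"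
      unfolding Mx by (metis norm_diff_ineq add_diff_cancel_right' diff_add_cancel norm_triangle_ineq2 order_trans)
    moreover have "norm (t *\<^sub>R (Rc *v x)) = t * norm (Rc *v x)" using t0 by simp
    moreover have "t * norm x / \<beta> \<le> t * norm (Rc *v x)"
      using lowR[of x] b1 t0 by (simp add: divide_le_eq mult.commute mult.left_commute)
    moreover have "t/(2*\<beta>) * norm x \<le> t * norm x / \<beta> - K * norm x"
    proof -
      have "K \<le> t/(2*\<beta>)" using t1 b1 by (simp add: le_divide_eq mult.commute)
      then have "K * norm x \<le> t/(2*\<beta>) * norm x" by (rule mult_right_mono) simp
      moreover have "t * norm x / \<beta> = 2 * (t/(2*\<beta>) * norm x)" by simp
      ultimately show ?thesis by linarith
    qed
    ultimately show ?thesis using errb[of x] by linarith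
  qed
  have linM: "M *v (x - y) = M *v x - M *v y" for x y
    by (simp add: matrix_vector_mult_diff_distrib)
  have injM: "inj ((*v) M)"
  proof (rule injI)
    fix x y assume "M *v x = M *v y"
    then have "norm (M *v (x - y)) = 0" by (simp add: linM)
    then have "t/(2*\<beta>) * norm (x - y) \<le> 0" using lowM[of "x - y"] by simp
    moreover have "0 < t/(2*\<beta>)" using t0 b1 by simp
    moreover have "0 \<le> t/(2*\<beta>) * norm (x - y)" using t0 b1 by simp
    ultimately have "t/(2*\<beta>) * norm (x - y) = 0" by linarith
    then show "x = y" using t0 b1 by simp
  qed
  have inv: "invertible M" by (rule inv_from_inj[OF injM])
  define y where "y = matrix_inv M *v \<phi>"
  have My: "M *v y = \<phi>" unfolding y_def by (rule matrix_inv_mv[OF inv])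
  define z where "z = (1/t) *\<^sub>R (Rc *v \<phi>)"
  define w where "w = Ec *v (Rc *v \<phi>) - \<sigma> *v (Rc *v \<phi>)"
  have Mz: "M *v z = \<phi> + (1/t) *\<^sub>R w"
  proof -
    have "M *v z = (1/t) *\<^sub>R (M *v (Rc *v \<phi>))" unfolding z_def by (rule mv_scaleR)
    also have "\<dots> = (1/t) *\<^sub>R (t *\<^sub>R \<phi> + w)"
      unfolding Mx w_def by (simp add: matrix_vector_mul_assoc RR)
    also have "\<dots> = \<phi> + (1/t) *\<^sub>R w" using t0 by (simp add: scaleR_add_right)
    finally show ?thesis .
  qed
  have wb: "norm w \<le> K * \<beta> * norm \<phi>"
  proof -
    have "norm w \<le> K * norm (Rc *v \<phi>)" unfolding w_def by (rule errb)
    also have "\<dots> \<le> K * (\<beta> * norm \<phi>)" using Rcb[of \<phi>] K0 by (simp add: mult_left_mono)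
    finally show ?thesis by simp
  qed
  have Myz: "M *v (y - z) = - ((1/t) *\<^sub>R w)" by (simp add: linM My Mz)
  have yz: "norm (y - z) \<le> 2*\<beta>^2*K/t^2 * norm \<phi>"
  proof -
    have "t/(2*\<beta>) * norm (y - z) \<le> (1/t) * norm w"
      using lowM[of "y - z"] Myz t0 by simp
    also have "\<dots> \<le> (1/t) * (K * \<beta> * norm \<phi>)" using wb t0 by (simp add: divide_right_mono)
    finally have h: "t/(2*\<beta>) * norm (y - z) \<le> (1/t) * (K * \<beta> * norm \<phi>)" .
    have "norm (y - z) = (2*\<beta>/t) * (t/(2*\<beta>) * norm (y - z))" using t0 b1 by simp
    also have "\<dots> \<le> (2*\<beta>/t) * ((1/t) * (K * \<beta> * norm \<phi>))"
      by (rule mult_left_mono[OF h]) (use t0 b1 in simp)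
    also have "\<dots> = 2*\<beta>^2*K/t^2 * norm \<phi>" by (simp add: power2_eq_square)
    finally show ?thesis .
  qed
  have cz: "cinner z \<psi> = of_real (1/t) * cinner (Rc *v \<phi>) \<psi>"
    unfolding z_def by (rule cinner_scaleR)
  have cz2: "c/t * norm \<phi> * norm \<psi> \<le> cmod (cinner z \<psi>)"
  proof -
    have "cmod (cinner z \<psi>) = (1/t) * cmod (cinner (Rc *v \<phi>) \<psi>)" using t0 cz by (simp add: norm_divide)
    moreover have "(1/t) * (c * norm \<phi> * norm \<psi>) \<le> (1/t) * cmod (cinner (Rc *v \<phi>) \<psi>)"
      using a t0 by (simp add: divide_right_mono)
    ultimately show ?thesis by simp
  qed
  have cyz: "cmod (cinner (y - z) \<psi>) \<le> c/(2*t) * norm \<phi> * norm \<psi>"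
  proof -
    have "cmod (cinner (y - z) \<psi>) \<le> norm (y - z) * norm \<psi>" by (rule cinner_CS)
    also have "\<dots> \<le> (2*\<beta>^2*K/t^2 * norm \<phi>) * norm \<psi>" using yz by (rule mult_right_mono) simp
    also have "\<dots> \<le> (c/(2*t) * norm \<phi>) * norm \<psi>"
    proof (rule mult_right_mono)
      have "2*\<beta>^2*K/t^2 \<le> c/(2*t)"
      proof -
        have "4*\<beta>^2*K \<le> t * c" using t2 c0 by (simp add: divide_le_eq)
        then have "2*\<beta>^2*K \<le> t*c/2" by linarith
        then have "2*\<beta>^2*K/t^2 \<le> (t*c/2)/t^2" by (rule divide_right_mono) simp
        also have "\<dots> = c/(2*t)" using t0 by (simp add: power2_eq_square)
        finally show ?thesis .
      qed
      then show "2*\<beta>^2*K/t^2 * norm \<phi> \<le> c/(2*t) * norm \<phi>" by (rule mult_right_mono) simp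
    qed simp
    finally show ?thesis by simp
  qed
  have "cinner y \<psi> = cinner z \<psi> + cinner (y - z) \<psi>" by (simp add: cinner_diff)
  then have "cmod (cinner z \<psi>) - cmod (cinner (y - z) \<psi>) \<le> cmod (cinner y \<psi>)"
    by (metis add_diff_cancel_left' norm_diff_ineq)
  then have "c/t * norm \<phi> * norm \<psi> - c/(2*t) * norm \<phi> * norm \<psi> \<le> cmod (cinner y \<psi>)"
    using order_trans[OF diff_mono[OF cz2 cyz]] by blast
  moreover have "c/t * norm \<phi> * norm \<psi> - c/(2*t) * norm \<phi> * norm \<psi> = (c/2)/t * norm \<phi> * norm \<psi>"
    by (simp add: field_simps)
  ultimately show ?thesis using inv y_def by simp
qed

definition famR :: "('n::finite \<Rightarrow> 'n) \<Rightarrow> ('n \<Rightarrow> real) \<Rightarrow> real^'n^'n" where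
  "famR \<pi> \<epsilon> = (\<chi> i j. if j = \<pi> i then \<epsilon> i else 0)"

definition valid :: "('n::finite \<Rightarrow> 'n) \<Rightarrow> ('n \<Rightarrow> real) \<Rightarrow> bool" where
  "valid \<pi> \<epsilon> \<longleftrightarrow> (\<forall>i. \<pi> (\<pi> i) = i) \<and> (\<forall>i. \<epsilon> i = 1 \<or> \<epsilon> i = -1) \<and> (\<forall>i. \<epsilon> (\<pi> i) = \<epsilon> i)"

lemma famR_sq:
  assumes "valid \<pi> \<epsilon>"
  shows "famR \<pi> \<epsilon> ** famR \<pi> \<epsilon> = mat 1"
proof -
  have "(\<Sum>k\<in>UNIV. (if k = \<pi> i then \<epsilon> i else 0) * (if j = \<pi> k then \<epsilon> k else 0))
        = (if j = i then 1 else 0)" for i j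
  proof -
    have "(\<Sum>k\<in>UNIV. (if k = \<pi> i then \<epsilon> i else 0) * (if j = \<pi> k then \<epsilon> k else 0))
        = (\<Sum>k\<in>UNIV. if k = \<pi> i then \<epsilon> i * (if j = \<pi> (\<pi> i) then \<epsilon> (\<pi> i) else 0) else 0)"
      by (rule sum.cong) auto
    also have "\<dots> = \<epsilon> i * (if j = \<pi> (\<pi> i) then \<epsilon> (\<pi> i) else 0)" by simp
    also have "\<dots> = (if j = i then 1 else 0)"
    proof -
      have inv: "\<pi> (\<pi> i) = i" and e: "\<epsilon> (\<pi> i) = \<epsilon> i" and pm: "\<epsilon> i = 1 \<or> \<epsilon> i = -1"
        using assms unfolding valid_def by auto
      have "\<epsilon> i * \<epsilon> i = 1" using pm by auto
      then show ?thesis by (simp add: inv e)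
    qed
    finally show ?thesis .
  qed
  then show ?thesis
    by (simp add: famR_def matrix_matrix_mult_def mat_def vec_eq_iff)
qed

lemma famR_sym:
  assumes "valid \<pi> \<epsilon>" shows "famR \<pi> \<epsilon> $ i $ j = famR \<pi> \<epsilon> $ j $ i"
proof -
  have inv: "\<And>i. \<pi> (\<pi> i) = i" and e: "\<And>i. \<epsilon> (\<pi> i) = \<epsilon> i" using assms unfolding valid_def by auto
  have "j = \<pi> i \<longleftrightarrow> i = \<pi> j" using inv by metis
  moreover have "j = \<pi> i \<Longrightarrow> \<epsilon> j = \<epsilon> i" using e by simp
  ultimately show ?thesis by (simp add: famR_def)
qed

lemma famR_bd: assumes "valid \<pi> \<epsilon>" shows "\<bar>famR \<pi> \<epsilon> $ i $ j\<bar> \<le> 1"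
proof -
  have "\<epsilon> i = 1 \<or> \<epsilon> i = -1" using assms unfolding valid_def by auto
  then show ?thesis by (auto simp: famR_def)
qed

lemma cmat_mult: "cmat_of_real (A ** B) = cmat_of_real A ** cmat_of_real B"
  by (simp add: cmat_of_real_def matrix_matrix_mult_def vec_eq_iff)

lemma cmat_one: "cmat_of_real (mat 1) = mat 1"
  by (simp add: cmat_of_real_def mat_def vec_eq_iff)

lemma cmat_famR_mv: "(cmat_of_real (famR \<pi> \<epsilon>) *v \<phi>) $ i = of_real (\<epsilon> i) * \<phi> $ (\<pi> i)"
proof -
  have "(\<Sum>j\<in>UNIV. complex_of_real (if j = \<pi> i then \<epsilon> i else 0) * \<phi> $ j)
     = (\<Sum>j\<in>UNIV. if j = \<pi> i then of_real (\<epsilon> i) * \<phi> $ j else 0)"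
    by (rule sum.cong) auto
  then show ?thesis by (simp add: cmat_of_real_def famR_def matrix_vector_mult_def)
qed

lemma cmod_add_sq: "cmod (a + b)^2 = cmod a^2 + cmod b^2 + 2 * Re (a * cnj b)"
  by (simp add: cmod_power2 power2_sum algebra_simps)

lemma norm_sq_vec: "norm (x::complex^'n)^2 = (\<Sum>i\<in>UNIV. cmod (x$i)^2)"
  unfolding norm_vec_def L2_set_def by (simp add: sum_nonneg)

lemma fam_exists:
  fixes \<phi> \<psi> :: "complex^'n"
  shows "\<exists>\<pi> \<epsilon>. valid \<pi> \<epsilon> \<and>
     norm \<phi> * norm \<psi> / (3 * real CARD('n)) \<le> cmod (cinner (cmat_of_real (famR \<pi> \<epsilon>) *v \<phi>) \<psi>)"
proof (rule ccontr)
  define n where "n = real CARD('n)"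
  have n1: "1 \<le> n" unfolding n_def using finite_UNIV_card_ge_0[where 'a='n] by simp
  define m where "m = norm \<phi> * norm \<psi> / (3 * n)"
  define N where "N p q = cnj (\<psi>$p) * \<phi>$q" for p q
  define a where "a \<pi> \<epsilon> = (\<Sum>i\<in>UNIV. of_real (\<epsilon> i) * N i (\<pi> i))" for \<pi> \<epsilon>
  have ca: "cinner (cmat_of_real (famR \<pi> \<epsilon>) *v \<phi>) \<psi> = a \<pi> \<epsilon>" for \<pi> \<epsilon>
    unfolding cinner_def a_def N_def cmat_famR_mv by (rule sum.cong) (auto simp: algebra_simps)
  assume neg: "\<not> ?thesis"
  have H: "cmod (a \<pi> \<epsilon>) < m" if v: "valid \<pi> \<epsilon>" for \<pi> \<epsilon>
  proof -
    have "\<not> (m \<le> cmod (a \<pi> \<epsilon>))" using neg v unfolding m_def n_def by (auto simp: ca)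
    then show ?thesis by simp
  qed
  define T where "T = (\<Sum>i\<in>UNIV. N i i)"
  have vid: "valid id (\<lambda>_. 1)" by (simp add: valid_def)
  have aid: "a id (\<lambda>_. 1) = T" by (simp add: a_def T_def)
  have HT: "cmod T < m" using H[OF vid] aid by simp
  have Hd: "cmod (T - 2 * N p p) < m" for p
  proof -
    define e where "e i = (if i = p then -1 else (1::real))" for i
    have v: "valid id e" by (simp add: valid_def e_def)
    have "a id e = (\<Sum>i\<in>UNIV. N i i - (if i = p then 2 * N p p else 0))"
      unfolding a_def by (rule sum.cong) (auto simp: e_def)
    also have "\<dots> = T - 2 * N p p" by (simp add: sum_subtractf T_def)
    finally show ?thesis using H[OF v] by simp
  qed
  have Hp: "cmod (N p p) < m" for p
  proof -
    have "2 * N p p = T - (T - 2 * N p p)" by simp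
    then have "cmod (2 * N p p) \<le> cmod T + cmod (T - 2 * N p p)" by (metis norm_triangle_ineq4)
    then show ?thesis using HT Hd[of p] by (simp add: norm_mult)
  qed
  have Hs: "cmod (T + (N p q - N p p) + (N q p - N q q)) < m" if "p \<noteq> q" for p q
  proof -
    define s where "s i = (if i = p then q else if i = q then p else i)" for i
    have v: "valid s (\<lambda>_. 1)" unfolding valid_def s_def using that by auto
    have "a s (\<lambda>_. 1) = (\<Sum>i\<in>UNIV. N i i + (if i = p then N p q - N p p else 0) + (if i = q then N q p - N q q else 0))"
      unfolding a_def by (rule sum.cong) (use that in \<open>auto simp: s_def\<close>)
    also have "\<dots> = T + (N p q - N p p) + (N q p - N q q)" by (simp add: sum.distrib T_def)
    finally show ?thesis using H[OF v] by simp
  qed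
  have m0: "0 < m" using HT by (meson le_less_trans norm_ge_zero)
  have B: "cmod (N p q + N q p) \<le> 4 * m" for p q
  proof (cases "p = q")
    case True
    then show ?thesis using Hp[of p] m0 by (simp add: norm_mult)
  next
    case False
    have "N p q + N q p = (T + (N p q - N p p) + (N q p - N q q)) - T + N p p + N q q" by simp
    moreover have "cmod (X - T + N p p + N q q) \<le> cmod X + cmod T + cmod (N p p) + cmod (N q q)" for X
    proof -
      have "cmod (X - T + N p p + N q q) \<le> cmod (X - T + N p p) + cmod (N q q)" by (rule norm_triangle_ineq)
      moreover have "cmod (X - T + N p p) \<le> cmod (X - T) + cmod (N p p)" by (rule norm_triangle_ineq)
      moreover have "cmod (X - T) \<le> cmod X + cmod T" by (rule norm_triangle_ineq4)
      ultimately show ?thesis by linarith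
    qed
    ultimately have "cmod (N p q + N q p) \<le> cmod (T + (N p q - N p p) + (N q p - N q q)) + cmod T + cmod (N p p) + cmod (N q q)"
      by metis
    then show ?thesis using Hs[OF False] HT Hp[of p] Hp[of q] by linarith
  qed
  have upper: "(\<Sum>p\<in>UNIV. \<Sum>q\<in>UNIV. cmod (N p q + N q p)^2) \<le> n * n * (16 * m^2)"
  proof -
    have "(\<Sum>p\<in>UNIV. \<Sum>q\<in>UNIV. cmod (N p q + N q p)^2) \<le> (\<Sum>p\<in>(UNIV::'n set). \<Sum>q\<in>(UNIV::'n set). 16 * m^2)"
    proof (intro sum_mono)
      fix p q
      have "cmod (N p q + N q p)^2 \<le> (4*m)^2" by (rule power_mono) (use B[of p q] in auto)
      also have "(4*m)^2 = 16 * m^2" by (simp add: power_mult_distrib)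
      finally show "cmod (N p q + N q p)^2 \<le> 16 * m^2" .
    qed
    then show ?thesis by (simp add: n_def)
  qed
  define w where "w = (\<Sum>q\<in>UNIV. \<psi>$q * \<phi>$q)"
  have cross: "(\<Sum>p\<in>UNIV. \<Sum>q\<in>UNIV. N p q * cnj (N q p)) = cnj w * w"
  proof -
    have "cnj w * w = (\<Sum>p\<in>UNIV. cnj (\<psi>$p) * cnj (\<phi>$p)) * (\<Sum>q\<in>UNIV. \<psi>$q * \<phi>$q)"
      by (simp add: w_def)
    also have "\<dots> = (\<Sum>p\<in>UNIV. \<Sum>q\<in>UNIV. (cnj (\<psi>$p) * cnj (\<phi>$p)) * (\<psi>$q * \<phi>$q))"
      by (rule sum_product)
    also have "\<dots> = (\<Sum>p\<in>UNIV. \<Sum>q\<in>UNIV. N p q * cnj (N q p))"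
      unfolding N_def by (intro sum.cong refl) (simp add: algebra_simps)
    finally show ?thesis by simp
  qed
  have crossRe: "0 \<le> Re (\<Sum>p\<in>UNIV. \<Sum>q\<in>UNIV. N p q * cnj (N q p))"
    unfolding cross by (simp add: algebra_simps)
  have NN: "(\<Sum>p\<in>UNIV. \<Sum>q\<in>UNIV. cmod (N p q)^2) = norm \<psi>^2 * norm \<phi>^2"
  proof -
    have "norm \<psi>^2 * norm \<phi>^2 = (\<Sum>p\<in>UNIV. cmod (\<psi>$p)^2) * (\<Sum>q\<in>UNIV. cmod (\<phi>$q)^2)"
      by (simp add: norm_sq_vec)
    also have "\<dots> = (\<Sum>p\<in>UNIV. \<Sum>q\<in>UNIV. cmod (\<psi>$p)^2 * cmod (\<phi>$q)^2)" by (rule sum_product)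
    also have "\<dots> = (\<Sum>p\<in>UNIV. \<Sum>q\<in>UNIV. cmod (N p q)^2)"
      unfolding N_def by (intro sum.cong refl) (simp add: norm_mult power_mult_distrib)
    finally show ?thesis by simp
  qed
  have swap: "(\<Sum>p\<in>UNIV. \<Sum>q\<in>UNIV. cmod (N q p)^2) = (\<Sum>p\<in>UNIV. \<Sum>q\<in>UNIV. cmod (N p q)^2)"
    by (rule sum.swap)
  have lower: "2 * (norm \<phi> * norm \<psi>)^2 \<le> (\<Sum>p\<in>UNIV. \<Sum>q\<in>UNIV. cmod (N p q + N q p)^2)"
  proof -
    have "(\<Sum>p\<in>UNIV. \<Sum>q\<in>UNIV. cmod (N p q + N q p)^2)
      = (\<Sum>p\<in>UNIV. \<Sum>q\<in>UNIV. cmod (N p q)^2) + (\<Sum>p\<in>UNIV. \<Sum>q\<in>UNIV. cmod (N q p)^2)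
        + 2 * Re (\<Sum>p\<in>UNIV. \<Sum>q\<in>UNIV. N p q * cnj (N q p))"
    proof -
      have "(\<Sum>p\<in>UNIV. \<Sum>q\<in>UNIV. cmod (N p q + N q p)^2)
        = (\<Sum>p\<in>UNIV. \<Sum>q\<in>UNIV. cmod (N p q)^2 + cmod (N q p)^2 + 2 * Re (N p q * cnj (N q p)))"
        by (simp only: cmod_add_sq)
      also have "\<dots> = (\<Sum>p\<in>UNIV. \<Sum>q\<in>UNIV. cmod (N p q)^2) + (\<Sum>p\<in>UNIV. \<Sum>q\<in>UNIV. cmod (N q p)^2)
        + 2 * (\<Sum>p\<in>UNIV. \<Sum>q\<in>UNIV. Re (N p q * cnj (N q p)))"
        by (simp only: sum.distrib sum_distrib_left)
      finally show ?thesis by simp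
    qed
    then show ?thesis using swap NN crossRe by (simp add: power_mult_distrib)
  qed
  have "2 * (norm \<phi> * norm \<psi>)^2 \<le> n * n * (16 * m^2)" using lower upper by linarith
  also have "\<dots> = 16/9 * (norm \<phi> * norm \<psi>)^2"
    unfolding m_def using n1 by (simp add: power2_eq_square field_simps)
  finally have "(norm \<phi> * norm \<psi>)^2 \<le> 0" by simp
  then have "norm \<phi> * norm \<psi> = 0" by simp
  then have "m = 0" by (simp add: m_def)
  then show False using m0 by simp
qed

definition Iset :: "('n::{finite,linorder} \<times> 'n) set" where "Iset = {(j,k). j \<le> k}"
definition Mf :: "('n::{finite,linorder} \<times> 'n) \<Rightarrow> real measure" where
  "Mf = (\<lambda>(j,k). if j = k then gauss_var 2 else gauss_var 1)"
definition gsym :: "(('n::{finite,linorder} \<times> 'n::{finite,linorder}) \<Rightarrow> real) \<Rightarrow> real^'n::{finite,linorder}^'n::{finite,linorder}" where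
  "gsym = (\<lambda>X. \<chi> (j::'n) (k::'n). if j \<le> k then X (j,k) else X (k,j))"

lemma GOE_eq: "GOE = distr (PiM Iset Mf) borel gsym"
  unfolding GOE_def GOE_entries_def Iset_def Mf_def gsym_def ..

lemma sets_Mf: "sets (Mf i) = sets borel"
  by (cases i) (simp add: Mf_def gauss_var_def)

lemma prob_Mf: "prob_space (Mf i)"
  by (cases i) (simp add: Mf_def gauss_var_def prob_space_normal_density)

lemma comp_meas: "i \<in> Iset \<Longrightarrow> (\<lambda>X. X i) \<in> borel_measurable (PiM Iset Mf)"
  using measurable_component_singleton[of i Iset Mf] measurable_cong_sets[OF refl sets_Mf] by blast

lemma gsym_meas: "gsym \<in> borel_measurable (PiM Iset (Mf :: ('n::{finite,linorder} \<times> 'n) \<Rightarrow> real measure))"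
proof (rule borel_measurable_euclidean_space[THEN iffD2], rule ballI)
  fix b :: "real^'n::{finite,linorder}^'n::{finite,linorder}" assume "b \<in> Basis"
  then obtain i u where b: "b = axis i u" and u: "u \<in> Basis" by (auto simp: Basis_vec_def)
  then obtain j v where u': "u = axis j v" and v: "v \<in> (Basis :: real set)" by (auto simp: Basis_vec_def)
  have v1: "v = 1" using v by simp
  have eq: "(\<lambda>x. gsym x \<bullet> b) = (\<lambda>x. if i \<le> j then x (i,j) else x (j,i))"
    by (simp add: b u' v1 inner_axis gsym_def)
  show "(\<lambda>x. gsym x \<bullet> b) \<in> borel_measurable (PiM Iset Mf)"
    unfolding eq
  proof (cases "i \<le> j")
    case True
    then show "(\<lambda>x. if i \<le> j then x (i,j) else x (j,i)) \<in> borel_measurable (PiM Iset Mf)"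
      using comp_meas[of "(i,j)"] by (simp add: Iset_def)
  next
    case False
    then have "j \<le> i" by simp
    then show "(\<lambda>x. if i \<le> j then x (i,j) else x (j,i)) \<in> borel_measurable (PiM Iset Mf)"
      using comp_meas[of "(j,i)"] False by (simp add: Iset_def)
  qed
qed

definition Sbox :: "real^'n^'n \<Rightarrow> (real^'n^'n) set" where
  "Sbox c = {V. \<forall>j k. \<bar>V$j$k - c$j$k\<bar> \<le> 1}"

lemma Sbox_sets: "Sbox c \<in> sets borel"
proof -
  have [measurable]: "(\<lambda>x::real^'n^'n. x$j$k) \<in> borel_measurable borel" for j k
    by (intro borel_measurable_continuous_onI continuous_intros)
  show ?thesis unfolding Sbox_def by measurable
qed

definition Lb :: "real \<Rightarrow> real" where "Lb t = exp (- ((t+1)^2) / 2) / sqrt (4*pi)"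

lemma Lb_pos: "0 < Lb t" by (simp add: Lb_def)

lemma nd_lower:
  assumes "\<bar>x\<bar> \<le> t + 1" and "v = 1 \<or> v = 2"
  shows "Lb t \<le> normal_density 0 (sqrt v) x"
proof -
  have v1: "1 \<le> v" and v2: "v \<le> 2" using assms(2) by auto
  have sq: "(sqrt v)^2 = v" using v1 by simp
  have a1: "sqrt (2 * pi * v) \<le> sqrt (4*pi)"
    using v2 by (intro real_sqrt_le_mono) simp
  have a2: "0 < sqrt (2 * pi * v)" using v1 by simp
  have A: "1 / sqrt (4*pi) \<le> 1 / sqrt (2 * pi * v)"
    using a1 a2 by (simp add: frac_le)
  have x2: "x^2 \<le> (t+1)^2"
  proof -
    have "\<bar>x\<bar>^2 \<le> (t+1)^2" by (rule power_mono[OF assms(1)]) simp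
    then show ?thesis by simp
  qed
  have x3: "x^2/(2 * v) \<le> x^2/2" using v1 by (intro divide_left_mono) auto
  have B: "exp (- ((t+1)^2) / 2) \<le> exp (- ((x - 0)^2) / (2 * v))"
    using x2 x3 by simp
  have "1 / sqrt (4*pi) * exp (- ((t+1)^2) / 2) \<le> 1 / sqrt (2 * pi * v) * exp (- ((x - 0)^2) / (2 * v))"
    by (rule mult_mono[OF A B]) (use v1 in simp_all)
  then show ?thesis unfolding normal_density_def sq Lb_def by simp
qed

lemma gauss_interval:
  assumes "\<bar>x0\<bar> \<le> t" and "v = 1 \<or> v = 2"
  shows "ennreal (2 * Lb t) \<le> emeasure (gauss_var v) {x0 - 1 .. x0 + 1}"
proof -
  have "emeasure (gauss_var v) {x0 - 1 .. x0 + 1}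
      = (\<integral>\<^sup>+ x. ennreal (normal_density 0 (sqrt v) x) * indicator {x0 - 1 .. x0 + 1} x \<partial>lborel)"
    unfolding gauss_var_def by (rule emeasure_density) auto
  also have "\<dots> \<ge> (\<integral>\<^sup>+ x. ennreal (Lb t) * indicator {x0 - 1 .. x0 + 1} x \<partial>lborel)"
  proof (rule nn_integral_mono)
    fix x
    show "ennreal (Lb t) * indicator {x0 - 1 .. x0 + 1} x
       \<le> ennreal (normal_density 0 (sqrt v) x) * indicator {x0 - 1 .. x0 + 1} x"
    proof (cases "x \<in> {x0 - 1 .. x0 + 1}")
      case True
      then have "\<bar>x\<bar> \<le> t + 1" using assms(1) by auto
      then show ?thesis using True nd_lower[OF _ assms(2)] by (simp add: ennreal_leI)
    qed simp
  qed
  also have "(\<integral>\<^sup>+ x. ennreal (Lb t) * indicator {x0 - 1 .. x0 + 1} x \<partial>lborel) = ennreal (Lb t) * 2"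
    by (subst nn_integral_cmult_indicator) auto
  finally show ?thesis using Lb_pos[of t] by (simp add: ennreal_mult' mult.commute)
qed


lemma space_Mf: "space (Mf i) = UNIV"
  using sets_eq_imp_space_eq[OF sets_Mf[of i]] by simp

lemma GOE_box:
  fixes c :: "real^'n::{finite,linorder}^'n::{finite,linorder}"
  assumes sym: "\<And>j k. c$j$k = c$k$j" and bd: "\<And>j k. \<bar>c$j$k\<bar> \<le> t"
  shows "ennreal ((2 * Lb t) ^ card (Iset :: ('n \<times> 'n) set)) \<le> emeasure GOE (Sbox c)"
proof -
  define A where "A i = {c$(fst i)$(snd i) - 1 .. c$(fst i)$(snd i) + 1}" for i :: "'n \<times> 'n"
  have E1: "emeasure GOE (Sbox c) = emeasure (PiM Iset Mf) (gsym -` Sbox c \<inter> space (PiM Iset Mf))"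
    unfolding GOE_eq by (rule emeasure_distr[OF gsym_meas Sbox_sets])
  have E2: "emeasure (PiM Iset Mf) (gsym -` Sbox c \<inter> space (PiM Iset Mf)) \<ge> emeasure (PiM Iset Mf) (PiE Iset A)"
  proof (rule emeasure_mono)
    show "gsym -` Sbox c \<inter> space (PiM Iset Mf) \<in> sets (PiM Iset Mf)"
      by (rule measurable_sets[OF gsym_meas Sbox_sets])
    show "PiE Iset A \<subseteq> gsym -` Sbox c \<inter> space (PiM Iset Mf)"
    proof
      fix X assume X: "X \<in> PiE Iset A"
      have "X \<in> space (PiM Iset Mf)" using X by (simp add: space_PiM space_Mf PiE_def Pi_def)
      moreover have "gsym X \<in> Sbox c"
        unfolding Sbox_def
      proof (intro CollectI allI)
        fix j k :: 'n
        show "\<bar>gsym X $ j $ k - c $ j $ k\<bar> \<le> 1"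
        proof (cases "j \<le> k")
          case True
          then have "(j,k) \<in> Iset" by (simp add: Iset_def)
          then have "X (j,k) \<in> A (j,k)" using X by (auto simp: PiE_def Pi_def)
          then show ?thesis using True by (simp add: gsym_def A_def abs_le_iff)
        next
          case False
          then have "(k,j) \<in> Iset" by (simp add: Iset_def)
          then have "X (k,j) \<in> A (k,j)" using X by (auto simp: PiE_def Pi_def)
          then show ?thesis using False sym[of j k] by (simp add: gsym_def A_def abs_le_iff)
        qed
      qed
      ultimately show "X \<in> gsym -` Sbox c \<inter> space (PiM Iset Mf)" by simp
    qed
  qed
  have E3: "emeasure (PiM Iset Mf) (PiE Iset A) = (\<Prod>i\<in>Iset. emeasure (Mf i) (A i))"
  proof (rule product_sigma_finite.emeasure_PiM)
    show "product_sigma_finite Mf"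
      unfolding product_sigma_finite_def using prob_Mf prob_space_imp_sigma_finite by blast
    show "finite Iset" by simp
    show "\<And>i. i \<in> Iset \<Longrightarrow> A i \<in> sets (Mf i)" by (simp add: sets_Mf A_def)
  qed
  have E4: "(\<Prod>i\<in>Iset. emeasure (Mf i) (A i)) \<ge> (\<Prod>i\<in>(Iset :: ('n \<times> 'n) set). ennreal (2 * Lb t))"
  proof (rule prod_mono_ennreal)
    fix i :: "'n \<times> 'n"
    obtain j k where i: "i = (j,k)" by (cases i)
    have "Mf i = gauss_var (if j = k then 2 else 1)" by (simp add: i Mf_def)
    then show "ennreal (2 * Lb t) \<le> emeasure (Mf i) (A i)"
      unfolding A_def using gauss_interval[OF bd[of j k], of "if j = k then 2 else 1"] by (simp add: i)
  qed
  have E5: "(\<Prod>i\<in>(Iset :: ('n \<times> 'n) set). ennreal (2 * Lb t)) = ennreal ((2 * Lb t) ^ card (Iset :: ('n \<times> 'n) set))"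
    using Lb_pos[of t] by (simp add: ennreal_power)
  show ?thesis using E1 E2 E3 E4 E5 by (metis order.trans)
qed

lemma mv_scaleR2: "(t *\<^sub>R (A::complex^'n^'m)) *v x = t *\<^sub>R (A *v x)"
  by (simp add: vec_eq_iff matrix_vector_mult_def scaleR_sum_right)

lemma Mx_lemma:
  fixes V R :: "real^'n^'n" and \<sigma> :: "complex^'n^'n"
  shows "(cmat_of_real V - \<sigma>) *v x = t *\<^sub>R (cmat_of_real R *v x) + (cmat_of_real (V - t *\<^sub>R R) *v x - \<sigma> *v x)"
proof -
  have "cmat_of_real V = t *\<^sub>R cmat_of_real R + cmat_of_real (V - t *\<^sub>R R)"
    by (simp add: cmat_of_real_def vec_eq_iff) (simp add: scaleR_conv_of_real)
  then show ?thesis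
    by (simp add: matrix_vector_mult_diff_rdistrib matrix_vector_mult_add_rdistrib mv_scaleR2)
qed

theorem mainTheorem10:
  fixes s :: real
  assumes "0 < s" and "s < 1"
  shows "\<exists>C :: real \<Rightarrow> real. (\<forall>r. C r > 0) \<and>
    (\<forall>(\<sigma> :: complex^('n::{finite,linorder})^('n::{finite,linorder})) (\<phi> :: complex^('n::{finite,linorder})) (\<psi> :: complex^('n::{finite,linorder})).
      (\<integral>\<^sup>+ V. ennreal (cmod (cinner (matrix_inv (cmat_of_real V - \<sigma>) *v \<phi>) \<psi>) powr s) \<partial>GOE)
        \<ge> ennreal (C (opnorm \<sigma>) * norm \<phi> powr s * norm \<psi> powr s))"
proof -
  define \<beta> where "\<beta> = real CARD('n)^2"
  define c0 where "c0 = 1 / (3 * real CARD('n))"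
  define K where "K r = \<beta> + \<bar>r\<bar>" for r
  define tt where "tt r = 2*\<beta>*K r + 4*\<beta>^2*K r/c0 + 1" for r
  define P where "P r = (2 * Lb (tt r)) ^ card (Iset :: ('n \<times> 'n) set)" for r
  define Q where "Q r = ((c0/2) / tt r) powr s" for r
  define C where "C r = P r * Q r" for r
  have b0: "0 \<le> \<beta>" unfolding \<beta>_def by simp
  have c00: "0 < c0" unfolding c0_def by simp
  have K0: "0 \<le> K r" for r unfolding K_def using b0 by simp
  have tt0: "0 < tt r" for r
    unfolding tt_def using b0 K0[of r] c00 by (simp add: add_nonneg_pos)
  have P0: "0 < P r" for r unfolding P_def using Lb_pos by simp
  have Q0: "0 < Q r" for r unfolding Q_def using tt0[of r] c00 by simp
  have C0: "\<forall>r. C r > 0" unfolding C_def using P0 Q0 by simp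
  have main: "ennreal (C (opnorm \<sigma>) * norm \<phi> powr s * norm \<psi> powr s)
     \<le> (\<integral>\<^sup>+ V. ennreal (cmod (cinner (matrix_inv (cmat_of_real V - \<sigma>) *v \<phi>) \<psi>) powr s) \<partial>GOE)"
    for \<sigma> :: "complex^'n::{finite,linorder}^'n::{finite,linorder}" and \<phi> \<psi> :: "complex^'n::{finite,linorder}"
  proof -
    define r where "r = opnorm \<sigma>"
    define t where "t = tt r"
    have t0: "0 < t" unfolding t_def by (rule tt0)
    have sb: "norm (\<sigma> *v x) \<le> \<bar>r\<bar> * norm x" for x
    proof -
      have "norm (\<sigma> *v x) \<le> r * norm x"
        unfolding r_def opnorm_def by (rule onorm) simp
      also have "\<dots> \<le> \<bar>r\<bar> * norm x" by (rule mult_right_mono) simp_all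
      finally show ?thesis .
    qed
    obtain \<pi> \<epsilon> where v: "valid \<pi> \<epsilon>"
      and fa: "norm \<phi> * norm \<psi> / (3 * real CARD('n)) \<le> cmod (cinner (cmat_of_real (famR \<pi> \<epsilon>) *v \<phi>) \<psi>)"
      using fam_exists by blast
    define R where "R = famR \<pi> \<epsilon>"
    define cb where "cb = t *\<^sub>R R"
    have cb_sym: "cb$j$k = cb$k$j" for j k unfolding cb_def R_def using famR_sym[OF v] by simp
    have cb_bd: "\<bar>cb$j$k\<bar> \<le> t" for j k
    proof -
      have "\<bar>cb$j$k\<bar> = t * \<bar>R$j$k\<bar>" unfolding cb_def using t0 by (simp add: abs_mult)
      also have "\<dots> \<le> t * 1" using famR_bd[OF v, of j k] t0 unfolding R_def by (intro mult_left_mono) auto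
      finally show ?thesis by simp
    qed
    have box: "ennreal (P r) \<le> emeasure GOE (Sbox cb)"
      unfolding P_def t_def[symmetric] using GOE_box[of cb t, OF cb_sym cb_bd] by simp
    define Qv where "Qv = Q r * norm \<phi> powr s * norm \<psi> powr s"
    have Qv0: "0 \<le> Qv" unfolding Qv_def using Q0[of r] by simp
    have pw: "ennreal Qv * indicator (Sbox cb) V
        \<le> ennreal (cmod (cinner (matrix_inv (cmat_of_real V - \<sigma>) *v \<phi>) \<psi>) powr s)" for V
    proof (cases "V \<in> Sbox cb")
      case True
      have "invertible (cmat_of_real V - \<sigma>) \<and> (c0/2)/t * norm \<phi> * norm \<psi> \<le> cmod (cinner (matrix_inv (cmat_of_real V - \<sigma>) *v \<phi>) \<psi>)"
      proof (rule key[where Rc = "cmat_of_real R" and Ec = "cmat_of_real (V - t *\<^sub>R R)" and r = "\<bar>r\<bar>"])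
        show "cmat_of_real R ** cmat_of_real R = mat 1"
          unfolding R_def cmat_mult[symmetric] famR_sq[OF v] cmat_one ..
        show "cmod (cmat_of_real R $ i $ j) \<le> 1" for i j
          using famR_bd[OF v, of i j] unfolding R_def by (simp add: cmat_of_real_def)
        show "cmod (cmat_of_real (V - t *\<^sub>R R) $ i $ j) \<le> 1" for i j
        proof -
          have "\<bar>V$i$j - t * R$i$j\<bar> \<le> 1" using True unfolding Sbox_def cb_def by simp
          then have "cmod (complex_of_real (V$i$j - t * R$i$j)) \<le> 1" by (simp only: norm_of_real)
          then show ?thesis by (simp add: cmat_of_real_def)
        qed
        show "norm (\<sigma> *v x) \<le> \<bar>r\<bar> * norm x" for x by (rule sb)
        show "0 \<le> \<bar>r\<bar>" by simp
        show "0 < c0" by (rule c00)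
        show "c0 * norm \<phi> * norm \<psi> \<le> cmod (cinner (cmat_of_real R *v \<phi>) \<psi>)"
          using fa unfolding R_def c0_def by simp
        show "2*(real CARD('n)^2)*(real CARD('n)^2+\<bar>r\<bar>) + 4*(real CARD('n)^2)^2*(real CARD('n)^2+\<bar>r\<bar>)/c0 \<le> t"
          unfolding t_def tt_def K_def \<beta>_def by simp
        show "(cmat_of_real V - \<sigma>) *v x = t *\<^sub>R (cmat_of_real R *v x) + (cmat_of_real (V - t *\<^sub>R R) *v x - \<sigma> *v x)" for x
          by (rule Mx_lemma)
      qed
      then have lb: "(c0/2)/t * norm \<phi> * norm \<psi> \<le> cmod (cinner (matrix_inv (cmat_of_real V - \<sigma>) *v \<phi>) \<psi>)" by blast
      have nn: "0 \<le> (c0/2)/t * norm \<phi> * norm \<psi>" using c00 t0 by simp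
      have "((c0/2)/t * norm \<phi> * norm \<psi>) powr s \<le> cmod (cinner (matrix_inv (cmat_of_real V - \<sigma>) *v \<phi>) \<psi>) powr s"
        by (rule powr_mono2) (use assms(1) nn lb in auto)
      moreover have "((c0/2)/t * norm \<phi> * norm \<psi>) powr s = Qv"
      proof -
        have a0: "0 \<le> (c0/2)/t" using c00 t0 by simp
        note h1 = powr_mult[of "(c0/2)/t * norm \<phi>" "norm \<psi>" s]
        note h2 = powr_mult[of "(c0/2)/t" "norm \<phi>" s]
        show ?thesis unfolding Qv_def Q_def t_def[symmetric] h1 h2 ..
      qed
      ultimately show ?thesis using True by (simp add: ennreal_leI)
    qed simp
    have sets_GOE: "Sbox cb \<in> sets GOE" unfolding GOE_eq using Sbox_sets by simp
    have "ennreal (C r * norm \<phi> powr s * norm \<psi> powr s) = ennreal Qv * ennreal (P r)"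
      unfolding C_def Qv_def using P0[of r] Qv0 Qv_def by (simp add: ennreal_mult'[symmetric] algebra_simps)
    also have "\<dots> \<le> ennreal Qv * emeasure GOE (Sbox cb)" by (rule mult_left_mono[OF box]) simp
    also have "\<dots> = (\<integral>\<^sup>+ V. ennreal Qv * indicator (Sbox cb) V \<partial>GOE)"
      by (rule nn_integral_cmult_indicator[OF sets_GOE, symmetric])
    also have "\<dots> \<le> (\<integral>\<^sup>+ V. ennreal (cmod (cinner (matrix_inv (cmat_of_real V - \<sigma>) *v \<phi>) \<psi>) powr s) \<partial>GOE)"
      by (rule nn_integral_mono) (rule pw)
    finally show ?thesis unfolding r_def .
  qed
  show ?thesis using C0 main by blast
qed

end
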